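(* Let $(\mathcal{X},\rho,\nu)$ be a metric measure space where $\nu$ is a finite Borel measure. Suppose $\mathbb{X}=(X_n)_{n\ge0}$ is uniformly dominated by $\nu$ at rate $\epsilon(\delta)$. Then for any $\epsilon>0$ there exists a region $\mathcal{X}'\subset\mathcal{X}$ of bounded diameter such that, for any nearest neighbor process $(\tilde X_n)_{n\ge1}$, \[\limsup_{N\to\infty}\frac1N\sum_{n=1}^N\mathbb{1}\{X_n\notin\mathcal{X}'\text{ or }\tilde X_n\notin\mathcal{X}'\}<\epsilon\quad\text{almost surely.}\]
   Context: $\mathbb{X}_{<n}=\{X_0,\dots,X_{n-1}\}$; a nearest neighbor process is any $(\tilde X_n)_{n\ge1}$ with $\tilde X_n\in\arg\min_{x\in\mathbb{X}_{<n}}\rho(X_n,x)$. $\mathbb{X}$ is uniformly dominated by $\nu$ if for every $\epsilon>0$ there is $\delta>0$ such that every measurable $A$ with $\nu(A)<\delta$ satisfies $\sup_n\Pr(X_n\in A\mid\mathbb{X}_{<n})<\epsilon$ a.s.; it is uniformly dominated at rate $\epsilon(\cdot)$ if in addition, for every $\delta>0$ and measurable $A$ with $\nu(A)<\delta$, $\sup_n\Pr(X_n\in A\mid\mathbb{X}_{<n})<\epsilon(\delta)$ a.s. *)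

theory Defs
  imports "HOL-Probability.Probability"
begin

definition past_sigma :: "'b measure \<Rightarrow> (nat \<Rightarrow> 'b \<Rightarrow> 'a::topological_space) \<Rightarrow> nat \<Rightarrow> 'b measure" where
  "past_sigma M X n =
     sigma (space M) (\<Union>i\<in>{..<n}. {X i -` B \<inter> space M | B. B \<in> sets borel})"

definition cond_prob_past :: "'b measure \<Rightarrow> (nat \<Rightarrow> 'b \<Rightarrow> 'a::topological_space) \<Rightarrow> nat \<Rightarrow> 'a set \<Rightarrow> 'b \<Rightarrow> ennreal" where
  "cond_prob_past M X n A = nn_cond_exp M (past_sigma M X n) (\<lambda>\<omega>. indicator A (X n \<omega>))"

definition unif_dominated_rate ::
  "'b measure \<Rightarrow> (nat \<Rightarrow> 'b \<Rightarrow> 'a::topological_space) \<Rightarrow> 'a measure \<Rightarrow> (real \<Rightarrow> real) \<Rightarrow> bool" where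
  "unif_dominated_rate M X \<nu> epsr \<longleftrightarrow>
     (\<forall>e>0. \<exists>\<delta>>0. \<forall>A \<in> sets \<nu>. measure \<nu> A < \<delta> \<longrightarrow>
        (AE \<omega> in M. (SUP n. cond_prob_past M X n A \<omega>) < ennreal e)) \<and>
     (\<forall>\<delta>>0. \<forall>A \<in> sets \<nu>. measure \<nu> A < \<delta> \<longrightarrow>
        (AE \<omega> in M. (SUP n. cond_prob_past M X n A \<omega>) < ennreal (epsr \<delta>)))"

definition nn_process :: "(nat \<Rightarrow> 'b \<Rightarrow> 'a::metric_space) \<Rightarrow> (nat \<Rightarrow> 'b \<Rightarrow> 'a) \<Rightarrow> bool" where
  "nn_process X Xt \<longleftrightarrow>
     (\<forall>n\<ge>1. \<forall>\<omega>. (\<exists>i<n. Xt n \<omega> = X i \<omega>) \<and>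
        (\<forall>i<n. dist (X n \<omega>) (Xt n \<omega>) \<le> dist (X n \<omega>) (X i \<omega>)))"

end

theory Submission
  imports Defs
begin


lemma diff_bound:
  fixes S :: "nat \<Rightarrow> real"
  assumes step: "\<And>n. \<bar>S (Suc n) - S n\<bar> \<le> 1" and "a \<le> b"
  shows "\<bar>S b - S a\<bar> \<le> real (b - a)"
  using assms(2)
proof (induction b)
  case 0 then show ?case by simp
next
  case (Suc b)
  show ?case
  proof (cases "a = Suc b")
    case True then show ?thesis by simp
  next
    case False
    then have "a \<le> b" using Suc by simp
    then have "\<bar>S b - S a\<bar> \<le> real (b - a)" using Suc by simp
    moreover have "\<bar>S (Suc b) - S b\<bar> \<le> 1" by (rule step)
    ultimately show ?thesis using \<open>a \<le> b\<close> by (simp add: Suc_diff_le)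
  qed
qed

lemma exists_sqrt_nat: "\<exists>j::nat. j^2 \<le> N \<and> N < (Suc j)^2"
proof (induction N)
  case 0 then show ?case by (intro exI[of _ 0]) simp
next
  case (Suc N)
  then obtain j where j: "j^2 \<le> N" "N < (Suc j)^2" by blast
  show ?case
  proof (cases "Suc N < (Suc j)^2")
    case True then show ?thesis using j by (intro exI[of _ j]) simp
  next
    case False
    then have "Suc N = (Suc j)^2" using j by simp
    then show ?thesis by (intro exI[of _ "Suc j"]) (simp add: power2_eq_square)
  qed
qed

lemma det_slln:
  fixes S :: "nat \<Rightarrow> real"
  assumes step: "\<And>n. \<bar>S (Suc n) - S n\<bar> \<le> 1"
    and sq: "\<And>m. \<exists>K. \<forall>j\<ge>K. \<bar>S (j^2)\<bar> \<le> real (j^2) / real (Suc m)"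
    and eta: "\<eta> > 0"
  shows "\<exists>N0. \<forall>N\<ge>N0. \<bar>S N\<bar> \<le> \<eta> * real N"
proof -
  obtain m where m: "inverse (real (Suc m)) < \<eta>/2"
    using reals_Archimedean[of "\<eta>/2"] eta by auto
  obtain K where K: "\<forall>j\<ge>K. \<bar>S (j^2)\<bar> \<le> real (j^2) / real (Suc m)" using sq by blast
  obtain L :: nat where L: "4/\<eta> < real L" using reals_Archimedean2 by blast
  show ?thesis
  proof (intro exI[of _ "(Suc (K+L))^2"] allI impI)
    fix N assume N: "(Suc (K+L))^2 \<le> N"
    obtain j where j: "j^2 \<le> N" "N < (Suc j)^2" using exists_sqrt_nat by blast
    have "Suc (K+L) < Suc j" using N j(2) power_less_imp_less_base[of "Suc (K+L)" 2 "Suc j"] by linarith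
    then have jK: "j \<ge> K" and jL: "j \<ge> L" by auto
    have Nj: "N \<le> j^2 + 2*j" using j(2) by (simp add: power2_eq_square)
    have "\<bar>S N - S (j^2)\<bar> \<le> real (N - j^2)" by (rule diff_bound[of S, OF step j(1)])
    also have "\<dots> \<le> 2 * real j"
    proof -
      have "N - j^2 \<le> 2 * j" using Nj by linarith
      then have "real (N - j^2) \<le> real (2*j)" by (simp only: of_nat_le_iff)
      then show ?thesis by simp
    qed
    finally have d: "\<bar>S N - S (j^2)\<bar> \<le> 2 * real j" .
    have s1: "\<bar>S (j^2)\<bar> \<le> real (j^2) / real (Suc m)" using K jK by blast
    have "real (j^2) / real (Suc m) = real (j^2) * inverse (real (Suc m))" by (simp add: divide_inverse)
    also have "\<dots> \<le> real (j^2) * (\<eta>/2)" using m by (intro mult_left_mono) auto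
    finally have s2: "\<bar>S (j^2)\<bar> \<le> \<eta>/2 * real (j^2)" using s1 by (simp add: mult.commute)
    have "4/\<eta> < real j" using L jL by linarith
    then have "4 < \<eta> * real j" using eta by (simp add: field_simps)
    then have "4 * real j \<le> \<eta> * real j * real j" by (intro mult_right_mono) auto
    then have s3: "2 * real j \<le> \<eta>/2 * real (j^2)" by (simp add: power2_eq_square)
    have "real (j^2) \<le> real N" using j(1) by simp
    then have s4: "\<eta>/2 * real (j^2) \<le> \<eta>/2 * real N" using eta by simp
    show "\<bar>S N\<bar> \<le> \<eta> * real N" using d s2 s3 s4 by linarith
  qed
qed



lemma aux_eq: "(a::real) > 0 \<Longrightarrow> b > 0 \<Longrightarrow> a^2 / (a^2/b)^2 = b^2 * inverse (a^2)"
  by (simp add: field_simps power2_eq_square)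

lemma sq_le_of_abs: "\<bar>a::real\<bar> \<le> b \<Longrightarrow> a^2 \<le> b^2"
  by (metis abs_ge_zero power2_abs power_mono)

lemma (in prob_space) slln_orth:
  fixes D :: "nat \<Rightarrow> 'a \<Rightarrow> real"
  assumes meas[measurable]: "\<And>n. D n \<in> borel_measurable M"
    and bnd: "\<And>n \<omega>. \<omega> \<in> space M \<Longrightarrow> \<bar>D n \<omega>\<bar> \<le> 1"
    and orth: "\<And>n. (\<integral>\<omega>. (\<Sum>i<n. D i \<omega>) * D n \<omega> \<partial>M) = 0"
  shows "AE \<omega> in M. \<forall>\<eta>>0. \<exists>N0. \<forall>N\<ge>N0. \<bar>\<Sum>i<N. D i \<omega>\<bar> \<le> \<eta> * real N"
proof -
  define S where "S N \<omega> = (\<Sum>i<N. D i \<omega>)" for N \<omega>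
  have Smeas[measurable]: "S N \<in> borel_measurable M" for N unfolding S_def by measurable
  have Sbnd: "\<bar>S N \<omega>\<bar> \<le> real N" if "\<omega> \<in> space M" for N \<omega>
  proof -
    have "\<bar>S N \<omega>\<bar> \<le> (\<Sum>i<N. \<bar>D i \<omega>\<bar>)" unfolding S_def by (rule sum_abs)
    also have "\<dots> \<le> (\<Sum>i<N. 1)" using bnd[OF that] by (intro sum_mono) auto
    finally show ?thesis by simp
  qed
  have intS2: "integrable M (\<lambda>\<omega>. (S N \<omega>)^2)" for N
  proof (rule integrable_const_bound[where B="real N ^ 2"])
    show "AE x in M. norm ((S N x)^2) \<le> real N ^ 2"
      using Sbnd by (auto intro!: AE_I2 sq_le_of_abs)
  qed simp
  have intSD: "integrable M (\<lambda>\<omega>. S N \<omega> * D N \<omega>)" for N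
  proof (rule integrable_const_bound[where B="real N"])
    show "AE x in M. norm (S N x * D N x) \<le> real N"
    proof (intro AE_I2)
      fix x assume x: "x \<in> space M"
      have "\<bar>S N x\<bar> * \<bar>D N x\<bar> \<le> real N * 1" using Sbnd[OF x] bnd[OF x] by (intro mult_mono) auto
      then show "norm (S N x * D N x) \<le> real N" by (simp add: abs_mult)
    qed
  qed simp
  have intD2: "integrable M (\<lambda>\<omega>. (D N \<omega>)^2)" for N
  proof (rule integrable_const_bound[where B="1"])
    show "AE x in M. norm ((D N x)^2) \<le> 1"
      using bnd by (auto intro!: AE_I2 sq_le_of_abs[where b=1, simplified])
  qed simp
  have ED2: "(\<integral>\<omega>. (D N \<omega>)^2 \<partial>M) \<le> 1" for N
  proof -
    have "(\<integral>\<omega>. (D N \<omega>)^2 \<partial>M) \<le> (\<integral>\<omega>. 1 \<partial>M)"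
      using bnd by (intro integral_mono intD2) (auto intro: sq_le_of_abs[where b=1, simplified])
    then show ?thesis by (simp add: prob_space)
  qed
  have ES2: "(\<integral>\<omega>. (S N \<omega>)^2 \<partial>M) \<le> real N" for N
  proof (induction N)
    case 0 then show ?case by (simp add: S_def)
  next
    case (Suc N)
    have eq: "(S (Suc N) \<omega>)^2 = (S N \<omega>)^2 + 2 * (S N \<omega> * D N \<omega>) + (D N \<omega>)^2" for \<omega>
      by (simp add: S_def power2_eq_square algebra_simps)
    have "(\<integral>\<omega>. (S (Suc N) \<omega>)^2 \<partial>M) = (\<integral>\<omega>. (S N \<omega>)^2 \<partial>M) + 2 * (\<integral>\<omega>. S N \<omega> * D N \<omega> \<partial>M) + (\<integral>\<omega>. (D N \<omega>)^2 \<partial>M)"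
      unfolding eq using intS2 intSD intD2 by simp
    also have "(\<integral>\<omega>. S N \<omega> * D N \<omega> \<partial>M) = 0" using orth[of N] by (simp add: S_def)
    finally show ?case using Suc ED2[of N] by simp
  qed
  have BC: "AE \<omega> in M. \<exists>K. \<forall>j\<ge>K. \<bar>S (j^2) \<omega>\<bar> \<le> real (j^2) / real (Suc m)" for m
  proof -
    define c where "c k = real ((Suc k)^2) / real (Suc m)" for k
    define A where "A k = {\<omega>\<in>space M. (c k)^2 \<le> (S ((Suc k)^2) \<omega>)^2}" for k
    have Ameas: "A k \<in> sets M" for k unfolding A_def by measurable
    have cpos: "c k > 0" for k unfolding c_def by simp
    have mA: "measure M (A k) \<le> real (Suc m)^2 * inverse (real (Suc k) ^ 2)" for k
    proof -
      have "measure M (A k) \<le> (\<integral>\<omega>. (S ((Suc k)^2) \<omega>)^2 \<partial>M) / (c k)^2"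
        unfolding A_def using cpos[of k]
        by (intro integral_Markov_inequality_measure[OF intS2, where A="space M"]) auto
      also have "\<dots> \<le> real ((Suc k)^2) / (c k)^2"
        using cpos[of k] ES2[of "(Suc k)^2"] by (intro divide_right_mono) auto
      also have "\<dots> = real (Suc m)^2 * inverse (real (Suc k) ^ 2)"
        unfolding c_def of_nat_power using aux_eq[of "real (Suc k)" "real (Suc m)"] by (simp del: of_nat_Suc)
      finally show ?thesis .
    qed
    have "summable (\<lambda>k. real (Suc m)^2 * inverse (real (Suc k) ^ 2))"
      using inverse_power_summable[of 2, where 'a=real]
      by (intro summable_mult) (simp add: summable_Suc_iff[where f="\<lambda>n. inverse (real n ^ 2)"] del: of_nat_Suc)
    then have "summable (\<lambda>k. measure M (A k))"
      by (rule summable_comparison_test'[where N=0]) (use mA in auto)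
    then have "AE \<omega> in M. eventually (\<lambda>k. \<omega> \<in> space M - A k) sequentially"
      by (intro borel_cantelli_AE1 Ameas) (auto simp: less_top[symmetric])
    then show ?thesis
    proof (rule AE_mp[OF _ AE_I2[OF impI]])
      fix \<omega> assume \<omega>: "\<omega> \<in> space M" and ev: "eventually (\<lambda>k. \<omega> \<in> space M - A k) sequentially"
      then obtain K where K: "\<forall>k\<ge>K. \<omega> \<notin> A k" by (auto simp: eventually_sequentially)
      show "\<exists>K. \<forall>j\<ge>K. \<bar>S (j^2) \<omega>\<bar> \<le> real (j^2) / real (Suc m)"
      proof (intro exI[of _ "Suc K"] allI impI)
        fix j assume j: "Suc K \<le> j"
        then obtain k where jk: "j = Suc k" and kK: "k \<ge> K" by (cases j) auto
        have "(S ((Suc k)^2) \<omega>)^2 < (c k)^2" using K kK \<omega> unfolding A_def by auto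
        then have "\<bar>S ((Suc k)^2) \<omega>\<bar> < c k" using cpos[of k] abs_le_square_iff[of "c k" "S ((Suc k)^2) \<omega>"] by auto
        then show "\<bar>S (j^2) \<omega>\<bar> \<le> real (j^2) / real (Suc m)" unfolding jk c_def by simp
      qed
    qed
  qed
  then have "AE \<omega> in M. \<forall>m. \<exists>K. \<forall>j\<ge>K. \<bar>S (j^2) \<omega>\<bar> \<le> real (j^2) / real (Suc m)"
    by (simp add: AE_all_countable)
  then show ?thesis
  proof (rule AE_mp[OF _ AE_I2[OF impI]])
    fix \<omega> assume \<omega>: "\<omega> \<in> space M" and H: "\<forall>m. \<exists>K. \<forall>j\<ge>K. \<bar>S (j^2) \<omega>\<bar> \<le> real (j^2) / real (Suc m)"
    show "\<forall>\<eta>>0. \<exists>N0. \<forall>N\<ge>N0. \<bar>\<Sum>i<N. D i \<omega>\<bar> \<le> \<eta> * real N"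
    proof (intro allI impI)
      fix \<eta> :: real assume "\<eta> > 0"
      have step: "\<bar>S (Suc n) \<omega> - S n \<omega>\<bar> \<le> 1" for n using bnd[OF \<omega>] by (simp add: S_def)
      from det_slln[of "\<lambda>N. S N \<omega>", OF step spec[OF H] \<open>\<eta> > 0\<close>]
      show "\<exists>N0. \<forall>N\<ge>N0. \<bar>\<Sum>i<N. D i \<omega>\<bar> \<le> \<eta> * real N" by (simp add: S_def)
    qed
  qed
qed



lemma past_gen_subset:
  assumes "\<And>n. X n \<in> borel_measurable M"
  shows "(\<Union>i\<in>{..<n}. {X i -` B \<inter> space M | B. B \<in> sets borel}) \<subseteq> sets M"
  using assms by auto

lemma past_gen_pow:
  "(\<Union>i\<in>{..<n}. {X i -` B \<inter> space M | B. B \<in> sets borel}) \<subseteq> Pow (space M)"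
  by auto

lemma space_past: "space (past_sigma M X n) = space M"
  unfolding past_sigma_def by (rule space_measure_of[OF past_gen_pow])

lemma sets_past: "sets (past_sigma M X n) = sigma_sets (space M) (\<Union>i\<in>{..<n}. {X i -` B \<inter> space M | B. B \<in> sets borel})"
  unfolding past_sigma_def by (rule sets_measure_of[OF past_gen_pow])

lemma subalg_past:
  assumes "\<And>n. X n \<in> borel_measurable M"
  shows "subalgebra M (past_sigma M X n)"
  unfolding subalgebra_def space_past sets_past
  using sets.sigma_sets_subset[OF past_gen_subset[OF assms]] by simp

lemma subalg_past_mono:
  assumes "n \<le> m"
  shows "subalgebra (past_sigma M X m) (past_sigma M X n)"
  unfolding subalgebra_def space_past sets_past
  using assms by (intro conjI refl sigma_sets_mono' UN_mono) auto

lemma meas_past_mono: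
  assumes "n \<le> m" "f \<in> borel_measurable (past_sigma M X n)"
  shows "f \<in> borel_measurable (past_sigma M X m)"
  by (rule measurable_from_subalg[OF subalg_past_mono[OF assms(1)] assms(2)])

lemma X_meas_past:
  fixes X :: "nat \<Rightarrow> 'b \<Rightarrow> 'a::topological_space"
  assumes "i < n"
  shows "X i \<in> borel_measurable (past_sigma M X n)"
proof (rule measurableI)
  fix x assume "x \<in> space (past_sigma M X n)" then show "X i x \<in> space borel" by simp
next
  fix B :: "'a set" assume "B \<in> sets borel"
  then have "X i -` B \<inter> space M \<in> (\<Union>i\<in>{..<n}. {X i -` B \<inter> space M | B. B \<in> sets borel})"
    using assms by blast
  then show "X i -` B \<inter> space (past_sigma M X n) \<in> sets (past_sigma M X n)"
    unfolding space_past sets_past by (rule sigma_sets.Basic)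
qed

lemma sfs_past:
  assumes "prob_space M" "\<And>n. X n \<in> borel_measurable M"
  shows "sigma_finite_subalgebra M (past_sigma M X n)"
proof -
  interpret prob_space M by fact
  have "finite_measure_subalgebra M (past_sigma M X n)"
    by unfold_locales (rule subalg_past[OF assms(2)])
  then show ?thesis by (rule finite_measure_subalgebra_is_sigma_finite)
qed



lemma enn2real_lt: "x < ennreal e \<Longrightarrow> 0 < e \<Longrightarrow> enn2real x < e"
  by (cases x) (auto simp: ennreal_less_iff)

lemma freq:
  fixes X :: "nat \<Rightarrow> 'b \<Rightarrow> 'a::topological_space"
  assumes PS: "prob_space M" and Xm[measurable]: "\<And>n. X n \<in> borel_measurable M"
    and A[measurable]: "A \<in> sets borel"
    and e': "0 < e'" "e' \<le> 1"
    and H: "AE \<omega> in M. \<forall>n. cond_prob_past M X n A \<omega> < ennreal e'"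
  shows "AE \<omega> in M. \<forall>\<eta>>0. \<exists>N0. \<forall>N\<ge>N0. (\<Sum>i<N. indicator A (X i \<omega>) :: real) \<le> (e' + \<eta>) * real N"
proof -
  interpret prob_space M by fact
  define F where "F n = past_sigma M X n" for n
  have sfs: "sigma_finite_subalgebra M (F n)" for n unfolding F_def by (rule sfs_past[OF PS Xm])
  have subalg: "subalgebra M (F n)" for n unfolding F_def by (rule subalg_past[OF Xm])
  define Y where "Y n \<omega> = (indicator A (X n \<omega>) :: real)" for n \<omega>
  define q where "q n \<omega> = enn2real (cond_prob_past M X n A \<omega>)" for n \<omega>
  define p where "p n \<omega> = min 1 (q n \<omega>)" for n \<omega>
  define D where "D n \<omega> = Y n \<omega> - p n \<omega>" for n \<omega>
  have YM[measurable]: "Y n \<in> borel_measurable M" for n unfolding Y_def by measurable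
  have YF: "Y n \<in> borel_measurable (F (Suc n))" for n
    unfolding Y_def F_def
    by (rule measurable_compose[OF X_meas_past borel_measurable_indicator[OF A]]) simp
  have qF: "q n \<in> borel_measurable (F n)" for n
    unfolding q_def F_def cond_prob_past_def
    by (intro borel_measurable_enn2real borel_measurable_nn_cond_exp)
  have pF: "p n \<in> borel_measurable (F n)" for n
    unfolding p_def using qF by measurable
  have DF: "D n \<in> borel_measurable (F m)" if "n < m" for n m
  proof -
    have "Y n \<in> borel_measurable (F m)" unfolding F_def
      using meas_past_mono[of "Suc n" m] YF[of n] that by (simp add: F_def)
    moreover have "p n \<in> borel_measurable (F m)" unfolding F_def
      using meas_past_mono[of n m] pF[of n] that by (simp add: F_def)
    ultimately show ?thesis unfolding D_def by measurable
  qed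
  have DM[measurable]: "D n \<in> borel_measurable M" for n
    by (rule measurable_from_subalg[OF subalg DF[of n "Suc n"]]) simp
  have pM[measurable]: "p n \<in> borel_measurable M" for n
    by (rule measurable_from_subalg[OF subalg pF])
  have Y01: "0 \<le> Y n \<omega>" "Y n \<omega> \<le> 1" for n \<omega> unfolding Y_def by (auto split: split_indicator)
  have p01: "0 \<le> p n \<omega>" "p n \<omega> \<le> 1" for n \<omega> unfolding p_def q_def by auto
  have Dbnd: "\<bar>D n \<omega>\<bar> \<le> 1" for n \<omega> unfolding D_def using Y01[of n \<omega>] p01[of n \<omega>] by auto
  have rce: "AE \<omega> in M. real_cond_exp M (F n) (Y n) \<omega> = q n \<omega>" for n
  proof -
    interpret sigma_finite_subalgebra M "F n" by (rule sfs)
    have e1: "(\<lambda>x. ennreal (Y n x)) = (\<lambda>x. indicator A (X n x))"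
      unfolding Y_def by (simp add: ennreal_indicator)
    have e2: "(\<lambda>x. ennreal (- Y n x)) = (\<lambda>x. 0)"
      using Y01 by (simp add: ennreal_neg)
    have "AE x in M. 0 = nn_cond_exp M (F n) (\<lambda>x. 0) x"
      by (rule nn_cond_exp_F_meas) auto
    then show ?thesis
      unfolding real_cond_exp_def e1 e2 q_def cond_prob_past_def F_def
      by (auto simp: F_def)
  qed
  have pq: "AE \<omega> in M. \<forall>n. p n \<omega> = q n \<omega> \<and> p n \<omega> \<le> e'"
    using H
  proof (rule AE_mp[OF _ AE_I2[OF impI]])
    fix \<omega> assume "\<forall>n. cond_prob_past M X n A \<omega> < ennreal e'"
    then have "q n \<omega> < e'" for n unfolding q_def using enn2real_lt e' by blast
    then show "\<forall>n. p n \<omega> = q n \<omega> \<and> p n \<omega> \<le> e'" unfolding p_def using e' by (metis less_eq_real_def min.absorb2 order_trans)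
  qed
  have orth: "(\<integral>\<omega>. (\<Sum>i<n. D i \<omega>) * D n \<omega> \<partial>M) = 0" for n
  proof -
    interpret sigma_finite_subalgebra M "F n" by (rule sfs)
    define Sn where "Sn \<omega> = (\<Sum>i<n. D i \<omega>)" for \<omega>
    have SnF[measurable]: "Sn \<in> borel_measurable (F n)" unfolding Sn_def
      by (intro borel_measurable_sum DF) auto
    have SnM[measurable]: "Sn \<in> borel_measurable M" by (rule measurable_from_subalg[OF subalg SnF])
    have Snb: "\<bar>Sn \<omega>\<bar> \<le> real n" for \<omega>
    proof -
      have "\<bar>Sn \<omega>\<bar> \<le> (\<Sum>i<n. \<bar>D i \<omega>\<bar>)" unfolding Sn_def by (rule sum_abs)
      also have "\<dots> \<le> (\<Sum>i<n. 1)" using Dbnd by (intro sum_mono) auto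
      finally show ?thesis by simp
    qed
    have bnd2: "\<bar>Sn \<omega> * f \<omega>\<bar> \<le> real n" if "\<And>\<omega>. \<bar>f \<omega>\<bar> \<le> 1" for f :: "'b \<Rightarrow> real" and \<omega>
    proof -
      have "\<bar>Sn \<omega>\<bar> * \<bar>f \<omega>\<bar> \<le> real n * 1" using Snb[of \<omega>] that[of \<omega>] by (intro mult_mono) auto
      then show ?thesis by (simp add: abs_mult)
    qed
    have intY: "integrable M (\<lambda>\<omega>. Sn \<omega> * Y n \<omega>)"
      by (rule integrable_const_bound[where B="real n"]) (use bnd2[of "Y n"] Y01 in auto)
    have intp: "integrable M (\<lambda>\<omega>. Sn \<omega> * p n \<omega>)"
      by (rule integrable_const_bound[where B="real n"]) (use bnd2[of "p n"] p01 in auto)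
    have "(\<integral>\<omega>. Sn \<omega> * real_cond_exp M (F n) (Y n) \<omega> \<partial>M) = (\<integral>\<omega>. Sn \<omega> * Y n \<omega> \<partial>M)"
      by (rule real_cond_exp_intg(2)[OF intY SnF YM])
    moreover have "(\<integral>\<omega>. Sn \<omega> * real_cond_exp M (F n) (Y n) \<omega> \<partial>M) = (\<integral>\<omega>. Sn \<omega> * p n \<omega> \<partial>M)"
    proof (rule integral_cong_AE)
      show "AE x in M. Sn x * real_cond_exp M (F n) (Y n) x = Sn x * p n x"
        using rce[of n] pq by eventually_elim auto
    qed auto
    ultimately have "(\<integral>\<omega>. Sn \<omega> * Y n \<omega> \<partial>M) - (\<integral>\<omega>. Sn \<omega> * p n \<omega> \<partial>M) = 0" by simp
    then have "(\<integral>\<omega>. Sn \<omega> * Y n \<omega> - Sn \<omega> * p n \<omega> \<partial>M) = 0" using intY intp by simp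
    then show ?thesis unfolding Sn_def D_def by (simp add: algebra_simps)
  qed
  have sl: "AE \<omega> in M. \<forall>\<eta>>0. \<exists>N0. \<forall>N\<ge>N0. \<bar>\<Sum>i<N. D i \<omega>\<bar> \<le> \<eta> * real N"
    by (rule slln_orth[OF DM Dbnd orth])
  show ?thesis
    using sl pq
  proof (eventually_elim)
    case (elim \<omega>)
    show ?case
    proof (intro allI impI)
      fix \<eta> :: real assume "\<eta> > 0"
      then obtain N0 where N0: "\<forall>N\<ge>N0. \<bar>\<Sum>i<N. D i \<omega>\<bar> \<le> \<eta> * real N" using elim by blast
      show "\<exists>N0. \<forall>N\<ge>N0. (\<Sum>i<N. indicator A (X i \<omega>) :: real) \<le> (e' + \<eta>) * real N"
      proof (intro exI[of _ N0] allI impI)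
        fix N assume "N \<ge> N0"
        then have a: "(\<Sum>i<N. D i \<omega>) \<le> \<eta> * real N" using N0 by auto
        have b: "(\<Sum>i<N. p i \<omega>) \<le> (\<Sum>i<N. e')" by (intro sum_mono) (use elim in blast)
        have "(\<Sum>i<N. indicator A (X i \<omega>) :: real) = (\<Sum>i<N. D i \<omega>) + (\<Sum>i<N. p i \<omega>)"
          unfolding D_def Y_def by (simp add: sum.distrib[symmetric])
        also have "\<dots> \<le> \<eta> * real N + e' * real N" using a b by (simp add: mult.commute)
        finally show "(\<Sum>i<N. indicator A (X i \<omega>) :: real) \<le> (e' + \<eta>) * real N"
          by (simp add: algebra_simps)
      qed
    qed
  qed
qed



lemma count_bound:
  fixes f g :: "nat \<Rightarrow> real"
  assumes f1: "\<And>n. f n \<le> 1" and g0: "\<And>n. 0 \<le> g n" and fg: "\<And>n. i0 < n \<Longrightarrow> f n \<le> g n"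
  shows "(\<Sum>n=1..N. f n) \<le> (\<Sum>n=1..N. g n) + real (min N i0)"
proof (induction N)
  case 0 then show ?case by simp
next
  case (Suc N)
  have s: "(\<Sum>n=1..Suc N. h n) = (\<Sum>n=1..N. h n) + h (Suc N)" for h :: "nat \<Rightarrow> real"
    by (simp add: sum.cl_ivl_Suc)
  show ?case
  proof (cases "Suc N \<le> i0")
    case True
    then have "min (Suc N) i0 = Suc (min N i0)" by simp
    then show ?thesis unfolding s using Suc f1[of "Suc N"] g0[of "Suc N"] by simp
  next
    case False
    then have "min (Suc N) i0 = min N i0" by simp
    then show ?thesis unfolding s using Suc fg[of "Suc N"] False by simp
  qed
qed



lemma aux_lin: "(a::real) \<le> P/2 + t \<Longrightarrow> 4 * t < P \<Longrightarrow> a \<le> 3/4 * P"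
  by linarith

theorem lemma7:
  fixes M :: "'b measure" and \<nu> :: "'a::metric_space measure"
    and X :: "nat \<Rightarrow> 'b \<Rightarrow> 'a" and epsr :: "real \<Rightarrow> real" and e :: real
  assumes "prob_space M"
    and "sets \<nu> = sets borel" and "finite_measure \<nu>"
    and "\<And>n. X n \<in> borel_measurable M"
    and "unif_dominated_rate M X \<nu> epsr"
    and "e > 0"
  shows "\<exists>X'. bounded X' \<and>
    (\<forall>Xt. (\<forall>n. Xt n \<in> borel_measurable M) \<and> nn_process X Xt \<longrightarrow>
      (AE \<omega> in M. limsup (\<lambda>N. ereal ((1 / real N) *
          (\<Sum>n=1..N. of_bool (X n \<omega> \<notin> X' \<or> Xt n \<omega> \<notin> X')))) < ereal e))"
proof -
  interpret prob_space M by fact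
  interpret nu: finite_measure \<nu> by fact
  note Xm = assms(4)
  define e' where "e' = min (e/4) 1"
  have e'pos: "0 < e'" and e'1: "e' \<le> 1" and e'e: "e' \<le> e/4" using assms(6) by (auto simp: e'_def)
  obtain \<delta> where \<delta>: "\<delta> > 0" and dom: "\<And>A. A \<in> sets \<nu> \<Longrightarrow> measure \<nu> A < \<delta> \<Longrightarrow>
      (AE \<omega> in M. (SUP n. cond_prob_past M X n A \<omega>) < ennreal e')"
    using assms(5) e'pos unfolding unif_dominated_rate_def by blast
  define x0 :: 'a where "x0 = undefined"
  define C where "C k = - ball x0 (real k)" for k
  have Csets: "C k \<in> sets \<nu>" for k unfolding C_def assms(2) by auto
  have "decseq C" unfolding C_def decseq_def by auto
  moreover have "(\<Inter>k. C k) = {}"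
  proof -
    have "x \<notin> C (Suc (nat \<lceil>dist x0 x\<rceil>))" for x
    proof -
      have "dist x0 x \<le> real (nat \<lceil>dist x0 x\<rceil>)" by linarith
      have "dist x0 x < 1 + real_of_int \<lceil>dist x0 x\<rceil>" using le_of_int_ceiling[of "dist x0 x"] by linarith
      then show ?thesis unfolding C_def by simp
    qed
    then show ?thesis by auto
  qed
  ultimately have "(\<lambda>k. measure \<nu> (C k)) \<longlonglongrightarrow> 0"
    using nu.finite_Lim_measure_decseq[of C] Csets by auto
  then have "eventually (\<lambda>k. measure \<nu> (C k) < \<delta>) sequentially"
    using \<delta> by (rule order_tendstoD(2))
  then obtain k where k: "measure \<nu> (C k) < \<delta>"
    by (auto simp: eventually_sequentially)
  define r where "r = real k"
  define A where "A = C k"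
  have Aborel[measurable]: "A \<in> sets borel" using Csets assms(2) unfolding A_def by auto
  have "AE \<omega> in M. (SUP n. cond_prob_past M X n A \<omega>) < ennreal e'"
    using dom[OF Csets k] unfolding A_def .
  then have H: "AE \<omega> in M. \<forall>n. cond_prob_past M X n A \<omega> < ennreal e'"
    proof (eventually_elim)
      case (elim \<omega>)
      show ?case
      proof
        fix n
        have "cond_prob_past M X n A \<omega> \<le> (SUP n. cond_prob_past M X n A \<omega>)" by (rule SUP_upper) simp
        then show "cond_prob_past M X n A \<omega> < ennreal e'" using elim by (rule le_less_trans)
      qed
    qed
  have fr: "AE \<omega> in M. \<forall>\<eta>>0. \<exists>N0. \<forall>N\<ge>N0. (\<Sum>i<N. indicator A (X i \<omega>) :: real) \<le> (e' + \<eta>) * real N"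
    by (rule freq[OF assms(1) Xm Aborel e'pos e'1 H])
  show ?thesis
  proof (intro exI[of _ "ball x0 (3*r)"] conjI allI impI)
    show "bounded (ball x0 (3*r))" by simp
    fix Xt assume Xt: "(\<forall>n. Xt n \<in> borel_measurable M) \<and> nn_process X Xt"
    show "AE \<omega> in M. limsup (\<lambda>N. ereal ((1 / real N) *
          (\<Sum>n=1..N. of_bool (X n \<omega> \<notin> ball x0 (3*r) \<or> Xt n \<omega> \<notin> ball x0 (3*r))))) < ereal e"
      using fr
    proof (rule AE_mp[OF _ AE_I2[OF impI]])
      fix \<omega> assume fr\<omega>: "\<forall>\<eta>>0. \<exists>N0. \<forall>N\<ge>N0. (\<Sum>i<N. indicator A (X i \<omega>) :: real) \<le> (e' + \<eta>) * real N"
      define f where "f n = (of_bool (X n \<omega> \<notin> ball x0 (3*r) \<or> Xt n \<omega> \<notin> ball x0 (3*r)) :: real)" for n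
      define g where "g n = (indicator A (X n \<omega>) :: real)" for n
      have f1: "f n \<le> 1" for n unfolding f_def by simp
      have g0: "0 \<le> g n" for n unfolding g_def by simp
      obtain i0 where fg: "\<And>n. i0 < n \<Longrightarrow> f n \<le> g n"
      proof (cases "\<exists>i. X i \<omega> \<in> ball x0 r")
        case True
        then obtain i0 where i0: "X i0 \<omega> \<in> ball x0 r" by blast
        have "f n \<le> g n" if n: "i0 < n" for n
        proof (cases "X n \<omega> \<in> ball x0 r")
          case False
          then show ?thesis proof -
            have "g n = 1" using False unfolding g_def A_def C_def r_def by simp
            then show ?thesis using f1[of n] by simp
          qed
        next
          case True
          have nn: "dist (X n \<omega>) (Xt n \<omega>) \<le> dist (X n \<omega>) (X i0 \<omega>)"
            using Xt n unfolding nn_process_def by auto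
          have t1: "dist (X n \<omega>) (X i0 \<omega>) \<le> dist x0 (X n \<omega>) + dist x0 (X i0 \<omega>)"
            by (rule dist_triangle3)
          have t2: "dist x0 (Xt n \<omega>) \<le> dist x0 (X n \<omega>) + dist (X n \<omega>) (Xt n \<omega>)"
            by (rule dist_triangle)
          have "dist x0 (Xt n \<omega>) < 3*r" "dist x0 (X n \<omega>) < 3*r"
            proof -
            have a: "dist x0 (X n \<omega>) < r" using True by simp
            have b: "dist x0 (X i0 \<omega>) < r" using i0 by simp
            have r0: "r \<ge> 0" unfolding r_def by simp
            show "dist x0 (Xt n \<omega>) < 3*r" "dist x0 (X n \<omega>) < 3*r"
              using a b r0 nn t1 t2 by linarith+
          qed
          then show ?thesis unfolding f_def g_def by simp
        qed
        then show ?thesis using that by blast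
      next
        case False
        have "f n \<le> g n" for n
          proof -
          have "X n \<omega> \<notin> ball x0 r" using False by blast
          then have "g n = 1" unfolding g_def A_def C_def r_def by simp
          then show ?thesis using f1[of n] by simp
        qed
        then show ?thesis using that by blast
      qed
      obtain N0 where N0: "\<And>N. N \<ge> N0 \<Longrightarrow> (\<Sum>i<N. g i) \<le> (e' + e/4) * real N"
      proof -
        have "e/4 > 0" using assms(6) by simp
        then show ?thesis using that fr\<omega> unfolding g_def by blast
      qed
      obtain N1 :: nat where N1: "4 * (e/2 + real i0) / e < real N1" using reals_Archimedean2 by blast
      have "eventually (\<lambda>N. ereal ((1 / real N) * (\<Sum>n=1..N. f n)) \<le> ereal (3/4 * e)) sequentially"
        unfolding eventually_sequentially
      proof (intro exI[of _ "N0 + N1 + 1"] allI impI)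
        fix N assume N: "N0 + N1 + 1 \<le> N"
        have Npos: "real N > 0" using N by simp
        have "(\<Sum>n=1..N. f n) \<le> (\<Sum>n=1..N. g n) + real (min N i0)"
          by (rule count_bound[OF f1 g0 fg])
        also have "(\<Sum>n=1..N. g n) \<le> (\<Sum>n<Suc N. g n)"
          by (rule sum_mono2) (auto simp: g0)
        also have "(\<Sum>n<Suc N. g n) \<le> (e' + e/4) * real (Suc N)" using N0[of "Suc N"] N by (simp del: of_nat_Suc sum.lessThan_Suc)
        also have "(e' + e/4) * real (Suc N) \<le> e/2 * real (Suc N)" using e'e by (intro mult_right_mono) auto
        also have "real (min N i0) \<le> real i0" by simp
        finally have s: "(\<Sum>n=1..N. f n) \<le> e/2 * real N + (e/2 + real i0)" by (simp add: algebra_simps add_divide_distrib)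
        have "4 * (e/2 + real i0) / e < real N" using N1 N by linarith
        then have "4 * (e/2 + real i0) < real N * e" using assms(6) by (simp add: field_simps)
        then have "(\<Sum>n=1..N. f n) \<le> 3/4 * e * real N"
        proof -
          have "e/2 * real N = (real N * e)/2" "3/4 * e * real N = 3/4 * (real N * e)" by simp_all
          then show ?thesis using aux_lin[OF s[unfolded \<open>e/2 * real N = (real N * e)/2\<close>] \<open>4 * (e/2 + real i0) < real N * e\<close>] by (simp add: algebra_simps)
        qed
        then have "(1 / real N) * (\<Sum>n=1..N. f n) \<le> 3/4 * e" using Npos by (simp add: field_simps)
        then show "ereal ((1 / real N) * (\<Sum>n=1..N. f n)) \<le> ereal (3/4 * e)" by simp
      qed
      then have "limsup (\<lambda>N. ereal ((1 / real N) * (\<Sum>n=1..N. f n))) \<le> ereal (3/4 * e)"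
        by (rule Limsup_bounded)
      also have "\<dots> < ereal e" using assms(6) by simp
      finally show "limsup (\<lambda>N. ereal ((1 / real N) *
          (\<Sum>n=1..N. of_bool (X n \<omega> \<notin> ball x0 (3*r) \<or> Xt n \<omega> \<notin> ball x0 (3*r))))) < ereal e"
        unfolding f_def .
    qed
  qed
qed

end
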